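(* Let $M,N$ be finitary matroids on a common ground set $E$ and let $A\subseteq E$. Then every $(M\setminus A,N/A)$-hindrance is also an $(M,N)$-hindrance.
   Context: For $X\subseteq E$, $N.X:=N/(E\setminus X)$. For an ordered pair $(M,N)$ of finitary matroids on a common ground set, an $(M,N)$-hindrance is a set $H$ that is independent but not spanning in the matroid $N.\mathsf{span}_M(H)$, where $\mathsf{span}_M$ is the closure operator of $M$. $M\setminus A$ is deletion and $N/A$ is contraction of $A$ (both matroids on $E\setminus A$). *)

theory Defs
  imports Main
begin

text \<open>Matroids on a possibly infinite ground set, given by independence axioms
(Bruhn, Diestel, Kriesell, Pendavingh, Wollan).\<close>

record 'a matroid =
  carrier :: "'a set"
  indep :: "'a set \<Rightarrow> bool"

definition basis_of :: "'a matroid \<Rightarrow> 'a set \<Rightarrow> 'a set \<Rightarrow> bool" where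
  "basis_of M X B \<longleftrightarrow> B \<subseteq> X \<and> indep M B \<and>
     (\<forall>J. indep M J \<and> B \<subseteq> J \<and> J \<subseteq> X \<longrightarrow> J = B)"

definition matroid :: "'a matroid \<Rightarrow> bool" where
  "matroid M \<longleftrightarrow>
     (\<forall>I. indep M I \<longrightarrow> I \<subseteq> carrier M) \<and>
     indep M {} \<and>
     (\<forall>I J. indep M J \<and> I \<subseteq> J \<longrightarrow> indep M I) \<and>
     (\<forall>I B. indep M I \<and> \<not> basis_of M (carrier M) I \<and> basis_of M (carrier M) B \<longrightarrow>
        (\<exists>x \<in> B - I. indep M (insert x I))) \<and>
     (\<forall>X I. X \<subseteq> carrier M \<and> indep M I \<and> I \<subseteq> X \<longrightarrow>
        (\<exists>J. I \<subseteq> J \<and> basis_of M X J))"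

definition finitary :: "'a matroid \<Rightarrow> bool" where
  "finitary M \<longleftrightarrow> (\<forall>I. I \<subseteq> carrier M \<and> (\<forall>F. F \<subseteq> I \<and> finite F \<longrightarrow> indep M F) \<longrightarrow> indep M I)"

definition delete :: "'a matroid \<Rightarrow> 'a set \<Rightarrow> 'a matroid" where
  "delete M A = \<lparr>carrier = carrier M - A, indep = (\<lambda>I. indep M I \<and> I \<subseteq> carrier M - A)\<rparr>"

definition contract :: "'a matroid \<Rightarrow> 'a set \<Rightarrow> 'a matroid" where
  "contract N A = \<lparr>carrier = carrier N - A,
     indep = (\<lambda>I. I \<subseteq> carrier N - A \<and> (\<exists>B. basis_of N (A \<inter> carrier N) B \<and> indep N (I \<union> B)))\<rparr>"

definition dotrestr :: "'a matroid \<Rightarrow> 'a set \<Rightarrow> 'a matroid" where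
  "dotrestr N X = contract N (carrier N - X)"

definition span :: "'a matroid \<Rightarrow> 'a set \<Rightarrow> 'a set" where
  "span M X = X \<union> {e \<in> carrier M. \<exists>I. I \<subseteq> X \<and> indep M I \<and> \<not> indep M (insert e I)}"

definition spanning :: "'a matroid \<Rightarrow> 'a set \<Rightarrow> bool" where
  "spanning M S \<longleftrightarrow> S \<subseteq> carrier M \<and> span M S = carrier M"

definition hindrance :: "'a matroid \<Rightarrow> 'a matroid \<Rightarrow> 'a set \<Rightarrow> bool" where
  "hindrance M N H \<longleftrightarrow>
     indep (dotrestr N (span M H)) H \<and> \<not> spanning (dotrestr N (span M H)) H"

end

theory Submission
  imports Defs
begin

lemma m_sub: assumes "matroid N" "indep N J" "I \<subseteq> J" shows "indep N I"
proof -
  have "\<forall>I J. indep N J \<and> I \<subseteq> J \<longrightarrow> indep N I" using assms(1) unfolding matroid_def by (elim conjE)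
  then show ?thesis using assms(2,3) by blast
qed
lemma m_carr: assumes "matroid N" "indep N I" shows "I \<subseteq> carrier N"
proof -
  have "\<forall>I. indep N I \<longrightarrow> I \<subseteq> carrier N" using assms(1) unfolding matroid_def by (elim conjE)
  then show ?thesis using assms(2) by blast
qed
lemma m_aug: assumes "matroid N" "indep N I" "\<not> basis_of N (carrier N) I" "basis_of N (carrier N) B"
  shows "\<exists>x\<in>B - I. indep N (insert x I)"
proof -
  have "\<forall>I B. indep N I \<and> \<not> basis_of N (carrier N) I \<and> basis_of N (carrier N) B \<longrightarrow>
        (\<exists>x \<in> B - I. indep N (insert x I))" using assms(1) unfolding matroid_def by (elim conjE)
  then show ?thesis using assms(2,3,4) by blast
qed
lemma m_ext: assumes "matroid N" "X \<subseteq> carrier N" "indep N I" "I \<subseteq> X" shows "\<exists>J. I \<subseteq> J \<and> basis_of N X J"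
proof -
  have "\<forall>X I. X \<subseteq> carrier N \<and> indep N I \<and> I \<subseteq> X \<longrightarrow>
        (\<exists>J. I \<subseteq> J \<and> basis_of N X J)" using assms(1) unfolding matroid_def by (elim conjE)
  then show ?thesis using assms(2,3,4) by blast
qed
lemma m_empty: "matroid N \<Longrightarrow> indep N {}"
  unfolding matroid_def by (elim conjE)

lemma L1:
  assumes m: "matroid N" and Y: "Y \<subseteq> carrier N" and b0: "basis_of N Y Q0" and b1: "basis_of N Y Q1"
    and PY: "P \<inter> Y = {}" and ind: "indep N (P \<union> Q0)"
  shows "indep N (P \<union> Q1)"
proof -
  obtain BE where BE1: "P \<union> Q0 \<subseteq> BE" and BE: "basis_of N (carrier N) BE"
    using m_ext[OF m order_refl ind m_carr[OF m ind]] by blast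
  have BEi: "indep N BE" and BEc: "BE \<subseteq> carrier N" using BE unfolding basis_of_def by auto
  have Q0: "Q0 \<subseteq> Y" "indep N Q0" "\<And>J. indep N J \<Longrightarrow> Q0 \<subseteq> J \<Longrightarrow> J \<subseteq> Y \<Longrightarrow> J = Q0"
    using b0 unfolding basis_of_def by auto
  have Q1: "Q1 \<subseteq> Y" "indep N Q1" "\<And>J. indep N J \<Longrightarrow> Q1 \<subseteq> J \<Longrightarrow> J \<subseteq> Y \<Longrightarrow> J = Q1"
    using b1 unfolding basis_of_def by auto
  define Z where "Z = Q1 \<union> (BE - Y)"
  have Zc: "Z \<subseteq> carrier N" using Q1(1) Y BEc unfolding Z_def by auto
  obtain T where QT: "Q1 \<subseteq> T" and bT: "basis_of N Z T"
    using m_ext[OF m Zc Q1(2)] Z_def by blast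
  have T: "T \<subseteq> Z" "indep N T" "\<And>J. indep N J \<Longrightarrow> T \<subseteq> J \<Longrightarrow> J \<subseteq> Z \<Longrightarrow> J = T"
    using bT unfolding basis_of_def by auto
  have TY: "T \<inter> Y \<subseteq> Q1" using T(1) unfolding Z_def by auto
  have Tbase: "basis_of N (carrier N) T"
  proof (rule ccontr)
    assume "\<not> basis_of N (carrier N) T"
    then obtain x where x: "x \<in> BE - T" "indep N (insert x T)" using m_aug[OF m T(2) _ BE] by blast
    show False
    proof (cases "x \<in> Y")
      case True
      have "insert x Q1 \<subseteq> insert x T" using QT by blast
      then have "indep N (insert x Q1)" by (rule m_sub[OF m x(2)])
      moreover have "insert x Q1 \<subseteq> Y" using Q1(1) True by blast
      ultimately have "insert x Q1 = Q1" using Q1(3) by blast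
      then show False using x QT by blast
    next
      case False
      have "insert x T \<subseteq> Z" using T(1) x False unfolding Z_def by auto
      then have "insert x T = T" using T(3)[OF x(2)] by blast
      then show False using x by blast
    qed
  qed
  have "BE - Y \<subseteq> T"
  proof
    fix z assume z: "z \<in> BE - Y"
    show "z \<in> T"
    proof (rule ccontr)
      assume zT: "z \<notin> T"
      have i1: "indep N (BE - {z})" by (rule m_sub[OF m BEi], blast)
      have "\<not> basis_of N (carrier N) (BE - {z})"
      proof
        assume "basis_of N (carrier N) (BE - {z})"
        then have "BE = BE - {z}" using BEi BEc unfolding basis_of_def by blast
        then show False using z by blast
      qed
      then obtain w where w: "w \<in> T - (BE - {z})" "indep N (insert w (BE - {z}))"
        using m_aug[OF m i1 _ Tbase] by blast
      have wBE: "w \<notin> BE" using w zT by auto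
      have wY: "w \<in> Y" using w(1) wBE T(1) Q1(1) unfolding Z_def by auto
      have "insert w Q0 \<subseteq> insert w (BE - {z})" using BE1 z Q0(1) by auto
      then have "indep N (insert w Q0)" by (rule m_sub[OF m w(2)])
      moreover have "insert w Q0 \<subseteq> Y" using Q0(1) wY by blast
      ultimately have "insert w Q0 = Q0" using Q0(3) by blast
      then show False using wBE BE1 by blast
    qed
  qed
  then have "P \<union> Q1 \<subseteq> T" using BE1 PY QT by blast
  then show ?thesis by (rule m_sub[OF m T(2)])
qed

lemma key:
  assumes m: "matroid N" and DY: "D \<subseteq> Y" and Y: "Y \<subseteq> carrier N" and IY: "I \<inter> Y = {}"
    and Q: "basis_of N Y Q" and ind: "indep N (I \<union> Q)"
  shows "\<exists>B. basis_of N D B \<and> indep N (I \<union> B)"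
proof -
  have "D \<subseteq> carrier N" using DY Y by blast
  then obtain B where bB: "basis_of N D B" using m_ext[OF m _ m_empty[OF m] empty_subsetI] by blast
  have "indep N B" "B \<subseteq> Y" using bB DY unfolding basis_of_def by auto
  then obtain Q' where Q': "B \<subseteq> Q'" "basis_of N Y Q'" using m_ext[OF m Y, of B] by blast
  have i: "indep N (I \<union> Q')" using L1[OF m Y Q Q'(2) IY ind] .
  have "I \<union> B \<subseteq> I \<union> Q'" using Q'(1) by blast
  then have "indep N (I \<union> B)" by (rule m_sub[OF m i])
  then show ?thesis using bB by blast
qed

lemma lemC:
  assumes m: "matroid N" and AE: "A \<subseteq> carrier N" and V: "V \<subseteq> carrier N - A"
    and bB': "basis_of (contract N A) V B'" and ind: "indep (contract N A) (J \<union> B')"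
  shows "\<exists>Q. basis_of N (A \<union> V) Q \<and> indep N (J \<union> Q)"
proof -
  have "\<exists>B. basis_of N (A \<inter> carrier N) B \<and> indep N ((J \<union> B') \<union> B)"
    using ind unfolding contract_def by simp
  then obtain B1 where B1: "basis_of N (A \<inter> carrier N) B1" and i: "indep N (J \<union> B' \<union> B1)"
    by blast
  have AA: "A \<inter> carrier N = A" using AE by auto
  have B1p: "B1 \<subseteq> A" "\<And>J. indep N J \<Longrightarrow> B1 \<subseteq> J \<Longrightarrow> J \<subseteq> A \<Longrightarrow> J = B1"
    using B1 AA unfolding basis_of_def by auto
  have B'p: "B' \<subseteq> V" "\<And>J. indep (contract N A) J \<Longrightarrow> B' \<subseteq> J \<Longrightarrow> J \<subseteq> V \<Longrightarrow> J = B'"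
    using bB' unfolding basis_of_def by auto
  have "basis_of N (A \<union> V) (B' \<union> B1)"
    unfolding basis_of_def
  proof (intro conjI allI impI)
    show "B' \<union> B1 \<subseteq> A \<union> V" using B1p B'p by auto
    show "indep N (B' \<union> B1)" by (rule m_sub[OF m i], blast)
    fix J0 assume J0: "indep N J0 \<and> B' \<union> B1 \<subseteq> J0 \<and> J0 \<subseteq> A \<union> V"
    show "J0 = B' \<union> B1"
    proof (rule ccontr)
      assume "J0 \<noteq> B' \<union> B1"
      then obtain x where x: "x \<in> J0" "x \<notin> B' \<union> B1" using J0 by blast
      show False
      proof (cases "x \<in> A")
        case True
        have "insert x B1 \<subseteq> J0" using J0 x by blast
        then have "indep N (insert x B1)" using m_sub[OF m] J0 by blast
        moreover have "insert x B1 \<subseteq> A" using B1p(1) True by blast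
        ultimately have "insert x B1 = B1" using B1p(2) by blast
        then show False using x by blast
      next
        case False
        then have xV: "x \<in> V" using x J0 by blast
        have "insert x B' \<union> B1 \<subseteq> J0" using J0 x by blast
        then have ii: "indep N (insert x B' \<union> B1)" using m_sub[OF m] J0 by blast
        have "insert x B' \<subseteq> carrier N - A" using V B'p(1) xV by blast
        then have "indep (contract N A) (insert x B')"
          unfolding contract_def using B1 ii by auto
        moreover have "insert x B' \<subseteq> V" using B'p(1) xV by blast
        ultimately have "insert x B' = B'" using B'p(2) by blast
        then show False using x by blast
      qed
    qed
  qed
  moreover have "indep N (J \<union> (B' \<union> B1))" using i by (simp add: Un_assoc)
  ultimately show ?thesis by blast
qed

theorem mainTheorem5:
  fixes M N :: "'a matroid" and E A H :: "'a set"
  assumes "matroid M" and "matroid N"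
    and "finitary M" and "finitary N"
    and "carrier M = E" and "carrier N = E"
    and "A \<subseteq> E"
    and "hindrance (delete M A) (contract N A) H"
  shows "hindrance M N H"
proof -
  note m = assms(2)
  define S' where "S' = span (delete M A) H"
  define S where "S = span M H"
  define V where "V = E - A - S'"
  have cN': "carrier (contract N A) = E - A" using assms(6) unfolding contract_def by simp
  have h1: "indep (dotrestr (contract N A) S') H" and h2: "\<not> spanning (dotrestr (contract N A) S') H"
    using assms(8) unfolding hindrance_def S'_def by auto
  have indN'': "\<And>I. indep (dotrestr (contract N A) S') I \<longleftrightarrow>
      I \<subseteq> (E - A) - V \<and> (\<exists>B'. basis_of (contract N A) V B' \<and> indep (contract N A) (I \<union> B'))"
    unfolding dotrestr_def contract_def[of "contract N A"] cN' V_def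
    by (auto simp: Int_absorb2 Diff_subset)
  have cN'': "carrier (dotrestr (contract N A) S') = (E - A) - V"
    unfolding dotrestr_def contract_def[of "contract N A"] cN' V_def by simp
  have HS': "H \<subseteq> (E - A) - V" using h1 indN'' by blast
  have S'sub: "S' \<subseteq> E - A" using HS' unfolding S'_def span_def delete_def assms(5) by auto
  have S'S: "S' \<subseteq> S" unfolding S'_def S_def span_def delete_def assms(5) using HS' by auto
  have HS: "H \<subseteq> S" unfolding S_def span_def by auto
  have HE: "H \<subseteq> E" using HS' by auto
  have AV: "A \<union> V = E - S'" using S'sub assms(7) unfolding V_def by auto
  have DY: "E - S \<subseteq> A \<union> V" using AV S'S by auto
  have Yc: "A \<union> V \<subseteq> carrier N" using assms(6,7) V_def by auto
  have Vc: "V \<subseteq> carrier N - A" using assms(6) V_def by auto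
  have AE: "A \<subseteq> carrier N" using assms(6,7) by auto
  have indN: "\<And>I. indep (dotrestr N S) I \<longleftrightarrow>
      I \<subseteq> E \<inter> S \<and> (\<exists>B. basis_of N (E - S) B \<and> indep N (I \<union> B))"
    unfolding dotrestr_def contract_def assms(6) by (auto simp: Int_absorb2 Diff_subset)
  have trN: "\<And>J. indep (dotrestr (contract N A) S') J \<Longrightarrow> J \<subseteq> E \<inter> S \<Longrightarrow> indep (dotrestr N S) J"
  proof -
    fix J assume J: "indep (dotrestr (contract N A) S') J" "J \<subseteq> E \<inter> S"
    then obtain B' where "J \<subseteq> (E - A) - V" "basis_of (contract N A) V B'" "indep (contract N A) (J \<union> B')"
      using indN'' by blast
    then obtain Q where Q: "basis_of N (A \<union> V) Q" "indep N (J \<union> Q)"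
      using lemC[OF m AE Vc] by blast
    have "J \<inter> (A \<union> V) = {}" using \<open>J \<subseteq> (E - A) - V\<close> by auto
    then obtain B where "basis_of N (E - S) B" "indep N (J \<union> B)" using key[OF m DY Yc _ Q(1) Q(2)] by blast
    then show "indep (dotrestr N S) J" using J(2) unfolding indN by blast
  qed
  have "H \<subseteq> E \<inter> S" using HS HE by blast
  then have i1: "indep (dotrestr N S) H" by (rule trN[OF h1])
  have "\<not> spanning (dotrestr N S) H"
  proof
    assume sp: "spanning (dotrestr N S) H"
    have sp1: "span (dotrestr (contract N A) S') H \<noteq> (E - A) - V"
      using h2 HS' cN'' unfolding spanning_def by auto
    have "span (dotrestr (contract N A) S') H \<subseteq> (E - A) - V"
      using HS' unfolding span_def cN'' by auto
    then obtain e where e0: "e \<in> (E - A) - V" "e \<notin> span (dotrestr (contract N A) S') H"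
      using sp1 by blast
    have e: "e \<in> (E - A) - V" "e \<notin> H"
      "\<And>I. I \<subseteq> H \<Longrightarrow> indep (dotrestr (contract N A) S') I \<Longrightarrow> indep (dotrestr (contract N A) S') (insert e I)"
      using e0 cN'' unfolding span_def by auto
    have eS: "e \<in> E \<inter> S" using e(1) S'S V_def by auto
    have ie: "indep (dotrestr N S) (insert e H)" using trN[OF e(3)[OF _ h1]] eS HS HE by blast
    have cNS: "carrier (dotrestr N S) = E \<inter> S"
      unfolding dotrestr_def contract_def assms(6) by auto
    have "e \<in> span (dotrestr N S) H" using sp eS cNS unfolding spanning_def by auto
    then obtain I where I: "I \<subseteq> H" "indep (dotrestr N S) I" "\<not> indep (dotrestr N S) (insert e I)"
      using e(2) unfolding span_def by auto
    from ie obtain B where "basis_of N (E - S) B" "indep N (insert e H \<union> B)" using indN by blast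
    moreover have "insert e I \<subseteq> E \<inter> S" using I(1) eS HS HE by auto
    ultimately have "indep (dotrestr N S) (insert e I)"
      using indN m_sub[OF m, of "insert e H \<union> B" "insert e I \<union> B"] I(1) by blast
    then show False using I(3) by blast
  qed
  then show ?thesis using i1 unfolding hindrance_def S_def by simp
qed

end
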